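(* Assume $t_m=1$. Then every maximal left special factor of $u_\beta$ contains at least one non-zero letter.
   Context: $\beta>1$ is a simple Parry number with $d_\beta(1)=t_1\cdots t_{m-1}t_m$, $m\ge2$, nonnegative integer digits, $t_1\ge1$, satisfying the Parry condition ($t_i\cdots t_m0^\omega$ lexicographically strictly smaller than $t_1\cdots t_m0^\omega$ for $2\le i\le m$). $\varphi$ is the substitution on $\mathcal A=\{0,\dots,m-1\}$ with $\varphi(k)=0^{t_{k+1}}(k+1)$ for $0\le k\le m-2$, $\varphi(m-1)=0^{t_m}$, and $u_\beta=\lim_n\varphi^n(0)$ is its fixed point. A factor $w$ is left special if at least two distinct letters $a$ make $aw$ a factor of $u_\beta$; a left special factor $w$ is maximal if for no letter $a$ is $wa$ left special. *)

theory Defs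
  imports Main
begin

text \<open>Digits d_beta(1) = t_1 ... t_m are stored as a list t with t ! (i-1) = t_i,
  so m = length t. The letters of the alphabet {0,...,m-1} are natural numbers.\<close>

definition digit_seq :: "nat list \<Rightarrow> nat \<Rightarrow> nat" where
  "digit_seq t n = (if n < length t then t ! n else 0)"

definition lex_less :: "(nat \<Rightarrow> nat) \<Rightarrow> (nat \<Rightarrow> nat) \<Rightarrow> bool" where
  "lex_less x y \<longleftrightarrow> (\<exists>k. (\<forall>j<k. x j = y j) \<and> x k < y k)"

text \<open>Parry condition: t_i...t_m 0^omega <_lex t_1...t_m 0^omega for 2 <= i <= m.\<close>
definition parry_cond :: "nat list \<Rightarrow> bool" where
  "parry_cond t \<longleftrightarrow> (\<forall>i. 1 \<le> i \<and> i < length t \<longrightarrow>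
      lex_less (\<lambda>n. digit_seq t (i + n)) (digit_seq t))"

definition simple_parry_digits :: "nat list \<Rightarrow> bool" where
  "simple_parry_digits t \<longleftrightarrow> length t \<ge> 2 \<and> t ! 0 \<ge> 1 \<and> parry_cond t"

definition phi :: "nat list \<Rightarrow> nat \<Rightarrow> nat list" where
  "phi t k = (if k + 1 < length t then replicate (t ! k) 0 @ [k + 1]
              else replicate (t ! (length t - 1)) 0)"

definition phi_word :: "nat list \<Rightarrow> nat list \<Rightarrow> nat list" where
  "phi_word t w = concat (map (phi t) w)"

text \<open>The fixed point u_beta = lim_n phi^n(0): its i-th letter is the letter eventually
  found at position i of phi^n(0).\<close>
definition u_beta :: "nat list \<Rightarrow> nat \<Rightarrow> nat" where
  "u_beta t i = (THE a. \<exists>N. \<forall>n\<ge>N. i < length ((phi_word t ^^ n) [0]) \<and>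
                                   ((phi_word t ^^ n) [0]) ! i = a)"

definition is_factor :: "(nat \<Rightarrow> nat) \<Rightarrow> nat list \<Rightarrow> bool" where
  "is_factor u w \<longleftrightarrow> (\<exists>i. \<forall>j<length w. u (i + j) = w ! j)"

definition left_special :: "(nat \<Rightarrow> nat) \<Rightarrow> nat list \<Rightarrow> bool" where
  "left_special u w \<longleftrightarrow> (\<exists>a b. a \<noteq> b \<and> is_factor u (a # w) \<and> is_factor u (b # w))"

definition maximal_left_special :: "(nat \<Rightarrow> nat) \<Rightarrow> nat list \<Rightarrow> bool" where
  "maximal_left_special u w \<longleftrightarrow> left_special u w \<and> (\<nexists>a. left_special u (w @ [a]))"

end

theory Submission
  imports Defs
begin

locale pb =
  fixes t :: "nat list"
  assumes sp: "simple_parry_digits t" and tm: "t ! (length t - 1) = 1"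
begin

definition U :: "nat \<Rightarrow> nat list" where "U n = (phi_word t ^^ n) [0]"

definition Sq :: "nat \<Rightarrow> nat" where
  "Sq q = length (phi_word t (map (u_beta t) [0..<q]))"

lemma m2: "2 \<le> length t" and t0: "1 \<le> t ! 0"
  using sp by (auto simp: simple_parry_digits_def)

lemma phi_last: "\<not> k + 1 < length t \<Longrightarrow> phi t k = [0]"
  using tm by (simp add: phi_def)

lemma phi_lt: "k + 1 < length t \<Longrightarrow> phi t k = replicate (t ! k) 0 @ [k + 1]"
  by (simp add: phi_def)

lemma phi_len: "1 \<le> length (phi t k)"
  by (cases "k + 1 < length t") (simp_all add: phi_lt phi_last)

lemma tne: "0 < length t" using m2 by auto

lemma phi_ne: "phi t k \<noteq> []" using phi_len[of k] by auto

lemma phi_set: "x \<in> set (phi t k) \<Longrightarrow> x < length t"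
  using tne by (cases "k + 1 < length t") (auto simp: phi_lt phi_last)

lemma phi_word_append: "phi_word t (a @ b) = phi_word t a @ phi_word t b"
  by (simp add: phi_word_def)

lemma phi_word_Cons: "phi_word t (a # b) = phi t a @ phi_word t b"
  by (simp add: phi_word_def)

lemma phi_word_Nil: "phi_word t [] = []"
  by (simp add: phi_word_def)

lemma U_Suc: "U (Suc n) = phi_word t (U n)"
  by (simp add: U_def)

lemma U_0: "U 0 = [0]" by (simp add: U_def)

lemma phi0: "phi t 0 = replicate (t ! 0) 0 @ [1]"
  using m2 by (simp add: phi_lt)

lemma U_ext: "\<exists>c. U (Suc n) = U n @ c"
proof (induction n)
  case 0
  have "U (Suc 0) = phi t 0" by (simp add: U_Suc U_0 phi_word_Cons phi_word_Nil)
  also have "\<dots> = [0] @ (replicate (t ! 0 - 1) 0 @ [1])"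
  proof -
    have "t ! 0 = Suc (t ! 0 - 1)" using t0 by simp
    then have "replicate (t ! 0) (0::nat) = 0 # replicate (t ! 0 - 1) 0"
      by (metis replicate_Suc)
    then show ?thesis by (simp add: phi0)
  qed
  finally show ?case by (auto simp: U_0)
next
  case (Suc n)
  then obtain c where "U (Suc n) = U n @ c" by blast
  then show ?case by (simp add: U_Suc phi_word_append)
qed

lemma U_mono: "n \<le> n' \<Longrightarrow> \<exists>c. U n' = U n @ c"
proof (induction n' rule: dec_induct)
  case base then show ?case by simp
next
  case (step k)
  then obtain c where "U k = U n @ c" by blast
  moreover obtain d where "U (Suc k) = U k @ d" using U_ext by blast
  ultimately show ?case by auto
qed

lemma U_hd: "\<exists>w. U n = 0 # w"
  using U_mono[of 0 n] by (auto simp: U_0)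

lemma phi_word_len: "length w \<le> length (phi_word t w)"
proof (induction w)
  case Nil then show ?case by simp
next
  case (Cons a w)
  then show ?case using phi_len[of a] by (simp add: phi_word_Cons)
qed

lemma U_len: "n < length (U n)"
proof (induction n)
  case 0 then show ?case by (simp add: U_0)
next
  case (Suc n)
  obtain w where w: "U n = 0 # w" using U_hd by blast
  have "length (phi t 0) \<ge> 2" using t0 by (simp add: phi0)
  then have "length (U (Suc n)) \<ge> 2 + length w"
    using phi_word_len[of w] by (simp add: U_Suc w phi_word_Cons)
  then show ?case using Suc w by simp
qed

lemma u_eq: "i < length (U n) \<Longrightarrow> u_beta t i = U n ! i"
proof -
  assume i: "i < length (U n)"
  have P: "\<forall>n'\<ge>n. i < length (U n') \<and> U n' ! i = U n ! i"
  proof (intro allI impI)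
    fix n' assume "n \<le> n'"
    then obtain c where "U n' = U n @ c" using U_mono by blast
    then show "i < length (U n') \<and> U n' ! i = U n ! i" using i by (simp add: nth_append)
  qed
  show ?thesis
    unfolding u_beta_def U_def[symmetric]
  proof (rule the_equality)
    show "\<exists>N. \<forall>n'\<ge>N. i < length (U n') \<and> U n' ! i = U n ! i" using P by blast
  next
    fix a assume "\<exists>N. \<forall>n'\<ge>N. i < length (U n') \<and> U n' ! i = a"
    then obtain N where N: "\<forall>n'\<ge>N. i < length (U n') \<and> U n' ! i = a" by blast
    have "U (max N n) ! i = a" using N[rule_format, of "max N n"] by simp
    moreover have "U (max N n) ! i = U n ! i" using P[rule_format, of "max N n"] by simp
    ultimately show "a = U n ! i" by simp
  qed
qed

lemma U_letters: "x \<in> set (U n) \<Longrightarrow> x < length t"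
proof (induction n arbitrary: x)
  case 0 then show ?case using tne by (simp add: U_0)
next
  case (Suc n)
  then show ?case using phi_set by (auto simp: U_Suc phi_word_def)
qed

lemma u_lt: "u_beta t i < length t"
  using u_eq[OF U_len[of i]] U_letters[OF nth_mem[OF U_len[of i]]] by simp

lemma u0: "u_beta t 0 = 0"
  using u_eq[of 0 0] by (simp add: U_0)

lemma Sq_Suc: "Sq (Suc q) = Sq q + length (phi t (u_beta t q))"
  by (simp add: Sq_def phi_word_append phi_word_Cons phi_word_Nil)

lemma Sq_0: "Sq 0 = 0" by (simp add: Sq_def phi_word_Nil)

lemma F2: "r < length (phi t (u_beta t q)) \<Longrightarrow> u_beta t (Sq q + r) = phi t (u_beta t q) ! r"
proof -
  assume r: "r < length (phi t (u_beta t q))"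
  let ?n = "Suc q"
  have q: "q < length (U ?n)" using U_len[of ?n] by simp
  have tk: "take q (U ?n) = map (u_beta t) [0..<q]"
  proof (rule nth_equalityI)
    show "length (take q (U ?n)) = length (map (u_beta t) [0..<q])" using q by simp
  next
    fix i assume "i < length (take q (U ?n))"
    then have "i < q" by simp
    then show "take q (U ?n) ! i = map (u_beta t) [0..<q] ! i" using u_eq[of i ?n] q by simp
  qed
  have un: "U ?n ! q = u_beta t q" using u_eq[OF q] by simp
  have eq: "U ?n = take q (U ?n) @ U ?n ! q # drop (Suc q) (U ?n)"
    using q by (simp add: id_take_nth_drop)
  have "U (Suc ?n) = phi_word t (take q (U ?n) @ U ?n ! q # drop (Suc q) (U ?n))"
    unfolding U_Suc[of ?n] using arg_cong[OF eq, of "phi_word t"] by blast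
  also have "\<dots> = phi_word t (map (u_beta t) [0..<q]) @ phi t (u_beta t q) @ phi_word t (drop (Suc q) (U ?n))"
    unfolding phi_word_append phi_word_Cons tk un by simp
  finally have UU: "U (Suc ?n) = phi_word t (map (u_beta t) [0..<q]) @ phi t (u_beta t q) @ phi_word t (drop (Suc q) (U ?n))" .
  have e: "U (Suc ?n) ! (Sq q + r) = phi t (u_beta t q) ! r"
    unfolding UU Sq_def using r by (simp add: nth_append)
  have l: "Sq q + r < length (U (Suc ?n))"
    unfolding UU Sq_def using r by simp
  show ?thesis using u_eq[OF l] e by simp
qed

lemma decomp: "\<exists>q r. r < length (phi t (u_beta t q)) \<and> i = Sq q + r"
proof (induction i)
  case 0 then show ?case using phi_ne[of "u_beta t 0"] by (intro exI[of _ 0] exI[of _ 0]) (simp add: Sq_0)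
next
  case (Suc i)
  then obtain q r where qr: "r < length (phi t (u_beta t q))" "i = Sq q + r" by blast
  show ?case
  proof (cases "Suc r < length (phi t (u_beta t q))")
    case True then show ?thesis using qr by (intro exI[of _ q] exI[of _ "Suc r"]) simp
  next
    case False
    then have "Suc r = length (phi t (u_beta t q))" using qr by simp
    then have "Suc i = Sq (Suc q) + 0" using qr by (simp add: Sq_Suc)
    then show ?thesis using phi_ne[of "u_beta t (Suc q)"] by blast
  qed
qed

lemma Sq_ge: "q \<le> Sq q"
proof (induction q)
  case 0 then show ?case by simp
next
  case (Suc q) then show ?case using phi_len[of "u_beta t q"] by (simp add: Sq_Suc)
qed

lemma prev_block: "1 \<le> q \<Longrightarrow> u_beta t (Sq q - 1) = last (phi t (u_beta t (q - 1)))"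
proof -
  assume "1 \<le> q"
  then obtain p where p: "q = Suc p" by (cases q) auto
  let ?l = "length (phi t (u_beta t p))"
  have eqn: "Sq q - 1 = Sq p + (?l - 1)" using p phi_len[of "u_beta t p"] by (simp add: Sq_Suc)
  have lt: "?l - 1 < ?l" using phi_len[of "u_beta t p"] by simp
  have "u_beta t (Sq q - 1) = phi t (u_beta t p) ! (?l - 1)"
    unfolding eqn by (rule F2[OF lt])
  moreover have "phi t (u_beta t p) \<noteq> []" using phi_len[of "u_beta t p"] by auto
  ultimately show ?thesis using p by (simp add: last_conv_nth)
qed


lemma last_phi: "k < length t \<Longrightarrow> last (phi t k) = (if k + 1 < length t then k + 1 else 0)"
  by (cases "k + 1 < length t") (simp_all add: phi_lt phi_last)

lemma last_inj: "a < length t \<Longrightarrow> b < length t \<Longrightarrow> last (phi t a) = last (phi t b) \<Longrightarrow> a = b"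
  by (auto simp: last_phi split: if_splits)

lemma last_neq: "a < length t \<Longrightarrow> last (phi t a) \<noteq> a"
  using m2 by (auto simp: last_phi)

lemma last_lt: "a < length t \<Longrightarrow> last (phi t a) < length t"
  using m2 by (auto simp: last_phi)

lemma parry_le: "x < length t \<Longrightarrow> t ! x \<le> t ! 0"
proof (cases "x = 0")
  case True then show ?thesis by simp
next
  case False
  assume x: "x < length t"
  have "parry_cond t" using sp by (simp add: simple_parry_digits_def)
  then have "lex_less (\<lambda>n. digit_seq t (x + n)) (digit_seq t)"
    using False x unfolding parry_cond_def by simp
  then obtain k where k: "\<forall>j<k. digit_seq t (x + j) = digit_seq t j" "digit_seq t (x + k) < digit_seq t k"
    unfolding lex_less_def by blast
  have d0: "digit_seq t 0 = t ! 0" using tne by (simp add: digit_seq_def)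
  have dx: "digit_seq t x = t ! x" using x by (simp add: digit_seq_def)
  show ?thesis
  proof (cases "k = 0")
    case True then show ?thesis using k d0 dx by simp
  next
    case False then show ?thesis using k(1)[rule_format, of 0] d0 dx by simp
  qed
qed

lemma occurs: "k < length t \<Longrightarrow> \<exists>q. u_beta t q = k"
proof (induction k)
  case 0 then show ?case using u0 by blast
next
  case (Suc k)
  then obtain q where q: "u_beta t q = k" by auto
  have kk: "k + 1 < length t" using Suc by simp
  have "t ! k < length (phi t (u_beta t q))" using q kk by (simp add: phi_lt)
  then have "u_beta t (Sq q + t ! k) = phi t k ! (t ! k)" using F2 q by simp
  also have "\<dots> = Suc k" using kk by (simp add: phi_lt nth_append)
  finally show ?case by blast
qed

lemma zero_pos: "\<exists>p\<ge>1. u_beta t p = 0"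
proof -
  have "length t - 1 < length t" using m2 by simp
  then obtain q where q: "u_beta t q = length t - 1" using occurs by blast
  have q1: "1 \<le> q" using q u0 m2 by (cases q) auto
  have ph: "phi t (u_beta t q) = [0]" using q m2 by (simp add: phi_last)
  have "u_beta t (Sq q + 0) = 0" using F2[of 0 q] ph by simp
  moreover have "1 \<le> Sq q" using Sq_ge[of q] q1 by simp
  ultimately show ?thesis by auto
qed

lemma A3: "1 \<le> p \<Longrightarrow> u_beta t p = 0 \<Longrightarrow> \<exists>P\<ge>1. u_beta t (P - 1) = last (phi t (u_beta t (p - 1)))
   \<and> (\<forall>s<t ! 0. u_beta t (P + s) = 0) \<and> u_beta t (P + t ! 0) = 1"
proof -
  assume p: "1 \<le> p" "u_beta t p = 0"
  have P1: "1 \<le> Sq p" using Sq_ge[of p] p by simp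
  have "\<forall>s<t ! 0. u_beta t (Sq p + s) = 0"
  proof (intro allI impI)
    fix s assume "s < t ! 0"
    then show "u_beta t (Sq p + s) = 0" using F2[of s p] p by (simp add: phi0 nth_append)
  qed
  moreover have "u_beta t (Sq p + t ! 0) = 1" using F2[of "t ! 0" p] p by (simp add: phi0 nth_append)
  ultimately show ?thesis using prev_block[OF p(1)] P1 by blast
qed

lemma LS0: "\<exists>c d P Q. c \<noteq> d \<and> 1 \<le> P \<and> 1 \<le> Q \<and> u_beta t (P - 1) = c \<and> u_beta t (Q - 1) = d
   \<and> (\<forall>s<t ! 0. u_beta t (P + s) = 0) \<and> (\<forall>s<t ! 0. u_beta t (Q + s) = 0)
   \<and> u_beta t (P + t ! 0) = 1 \<and> u_beta t (Q + t ! 0) = 1"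
proof -
  obtain p where p: "1 \<le> p" "u_beta t p = 0" using zero_pos by blast
  let ?a = "u_beta t (p - 1)"
  obtain P where P: "1 \<le> P" "u_beta t (P - 1) = last (phi t ?a)"
     "\<forall>s<t ! 0. u_beta t (P + s) = 0" "u_beta t (P + t ! 0) = 1" using A3[OF p] by blast
  have P0: "u_beta t P = 0" using P(3) t0 by (metis add_0_right less_le_trans zero_less_one)
  obtain Q where Q: "1 \<le> Q" "u_beta t (Q - 1) = last (phi t (u_beta t (P - 1)))"
     "\<forall>s<t ! 0. u_beta t (Q + s) = 0" "u_beta t (Q + t ! 0) = 1" using A3[OF P(1) P0] by blast
  have a: "?a < length t" by (rule u_lt)
  have "last (phi t ?a) \<noteq> last (phi t (last (phi t ?a)))"
    using last_neq[OF last_lt[OF a]] by metis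
  then have "u_beta t (P - 1) \<noteq> u_beta t (Q - 1)" using P(2) Q(2) by simp
  then show ?thesis using P Q by blast
qed

lemma mk_factor: "1 \<le> P \<Longrightarrow> u_beta t (P - 1) = c \<Longrightarrow> \<forall>s<k. u_beta t (P + s) = 0 \<Longrightarrow> u_beta t (P + k) = x
  \<Longrightarrow> is_factor (u_beta t) (c # replicate k 0 @ [x])"
  unfolding is_factor_def
proof (intro exI[of _ "P - 1"] allI impI)
  fix j assume P: "1 \<le> P" "u_beta t (P - 1) = c" "\<forall>s<k. u_beta t (P + s) = 0" "u_beta t (P + k) = x"
    and j: "j < length (c # replicate k 0 @ [x])"
  show "u_beta t (P - 1 + j) = (c # replicate k 0 @ [x]) ! j"
  proof (cases j)
    case 0 then show ?thesis using P by simp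
  next
    case (Suc s)
    then have e: "P - 1 + j = P + s" using P by simp
    show ?thesis
    proof (cases "s < k")
      case True then show ?thesis using e Suc P by (simp add: nth_append)
    next
      case False then have "s = k" using j Suc by simp
      then show ?thesis using e Suc P by (simp add: nth_append)
    qed
  qed
qed

lemma small_ext: "k \<le> t ! 0 \<Longrightarrow> \<exists>x. left_special (u_beta t) (replicate k 0 @ [x])"
proof -
  assume k: "k \<le> t ! 0"
  obtain c d P Q where cd: "c \<noteq> d" "1 \<le> P" "1 \<le> Q" "u_beta t (P - 1) = c" "u_beta t (Q - 1) = d"
    "\<forall>s<t ! 0. u_beta t (P + s) = 0" "\<forall>s<t ! 0. u_beta t (Q + s) = 0"
    "u_beta t (P + t ! 0) = 1" "u_beta t (Q + t ! 0) = 1" using LS0 by blast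
  let ?x = "if k < t ! 0 then 0 else 1"
  have "u_beta t (P + k) = ?x" using cd(6,8) k by (auto simp: not_less)
  moreover have "u_beta t (Q + k) = ?x" using cd(7,9) k by (auto simp: not_less)
  moreover have "\<forall>s<k. u_beta t (P + s) = 0" "\<forall>s<k. u_beta t (Q + s) = 0" using cd(6,7) k by auto
  ultimately have "is_factor (u_beta t) (c # replicate k 0 @ [?x])" "is_factor (u_beta t) (d # replicate k 0 @ [?x])"
    using mk_factor cd by blast+
  then show ?thesis using cd(1) unfolding left_special_def by auto
qed

lemma pos_nonzero: "u_beta t p = Suc k \<Longrightarrow> \<exists>q. u_beta t q = k \<and> p = Sq q + t ! k \<and> k + 1 < length t"
proof -
  assume pk: "u_beta t p = Suc k"
  obtain q r where qr: "r < length (phi t (u_beta t q))" "p = Sq q + r" using decomp by blast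
  have F: "u_beta t p = phi t (u_beta t q) ! r" using F2[OF qr(1)] qr(2) by simp
  show ?thesis
  proof (cases "u_beta t q + 1 < length t")
    case False
    then show ?thesis using F qr pk by (simp add: phi_last)
  next
    case True
    then have ph: "phi t (u_beta t q) = replicate (t ! u_beta t q) 0 @ [u_beta t q + 1]" by (simp add: phi_lt)
    show ?thesis
    proof (cases "r < t ! u_beta t q")
      case True then show ?thesis using F ph pk by (simp add: nth_append)
    next
      case False
      then have "r = t ! u_beta t q" using qr(1) ph by simp
      then have "u_beta t q = k" using F ph pk by (simp add: nth_append)
      then show ?thesis using qr \<open>r = _\<close> True by auto
    qed
  qed
qed

lemma pred: "1 \<le> k \<Longrightarrow> k < length t \<Longrightarrow> \<exists>c. \<forall>p. u_beta t p = k \<longrightarrow> u_beta t (p - 1) = c"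
proof (induction k)
  case 0 then show ?case by simp
next
  case (Suc k)
  show ?case
  proof (cases "1 \<le> t ! k")
    case True
    have "\<forall>p. u_beta t p = Suc k \<longrightarrow> u_beta t (p - 1) = 0"
    proof (intro allI impI)
      fix p assume "u_beta t p = Suc k"
      then obtain q where q: "u_beta t q = k" "p = Sq q + t ! k" "k + 1 < length t" using pos_nonzero by blast
      have ph: "phi t (u_beta t q) = replicate (t ! k) 0 @ [k + 1]" using q by (simp add: phi_lt)
      have "p - 1 = Sq q + (t ! k - 1)" using q True by simp
      moreover have "u_beta t (Sq q + (t ! k - 1)) = 0" using F2[of "t ! k - 1" q] ph True by (simp add: nth_append)
      ultimately show "u_beta t (p - 1) = 0" by simp
    qed
    then show ?thesis by blast
  next
    case False
    then have k1: "1 \<le> k" using t0 by (cases k) auto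
    then obtain c where c: "\<forall>p. u_beta t p = k \<longrightarrow> u_beta t (p - 1) = c" using Suc by auto
    have "\<forall>p. u_beta t p = Suc k \<longrightarrow> u_beta t (p - 1) = last (phi t c)"
    proof (intro allI impI)
      fix p assume "u_beta t p = Suc k"
      then obtain q where q: "u_beta t q = k" "p = Sq q + t ! k" "k + 1 < length t" using pos_nonzero by blast
      have q1: "1 \<le> q" using q(1) k1 u0 by (cases q) auto
      have "t ! k = 0" using False by simp
      then have "p = Sq q" using q by simp
      then have "u_beta t (p - 1) = last (phi t (u_beta t (q - 1)))" using prev_block[OF q1] q by simp
      also have "u_beta t (q - 1) = c" using c q by simp
      finally show "u_beta t (p - 1) = last (phi t c)" .
    qed
    then show ?thesis by blast
  qed
qed

lemma Bp: "\<exists>c. \<forall>i\<ge>1. (\<forall>s\<le>t ! 0. u_beta t (i + s) = 0) \<longrightarrow> u_beta t (i - 1) = c"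
proof -
  obtain c where c: "\<forall>p. u_beta t p = length t - 1 \<longrightarrow> u_beta t (p - 1) = c"
  proof -
    have "1 \<le> length t - 1" "length t - 1 < length t" using m2 by auto
    then show ?thesis using pred that by blast
  qed
  have "\<forall>i\<ge>1. (\<forall>s\<le>t ! 0. u_beta t (i + s) = 0) \<longrightarrow> u_beta t (i - 1) = last (phi t c)"
  proof (intro allI impI)
    fix i assume i: "1 \<le> i" and z: "\<forall>s\<le>t ! 0. u_beta t (i + s) = 0"
    obtain q r where qr: "r < length (phi t (u_beta t q))" "i = Sq q + r" using decomp by blast
    show "u_beta t (i - 1) = last (phi t c)"
    proof (cases "u_beta t q + 1 < length t")
      case True
      let ?x = "u_beta t q"
      have ph: "phi t ?x = replicate (t ! ?x) 0 @ [?x + 1]" using True by (simp add: phi_lt)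
      have r: "r \<le> t ! ?x" using qr(1) ph by simp
      have "t ! ?x \<le> t ! 0" using parry_le[OF u_lt] by simp
      then have "t ! ?x - r \<le> t ! 0" by simp
      then have "u_beta t (i + (t ! ?x - r)) = 0" using z by blast
      moreover have "i + (t ! ?x - r) = Sq q + t ! ?x" using qr r by simp
      moreover have "u_beta t (Sq q + t ! ?x) = ?x + 1" using F2[of "t ! ?x" q] ph by (simp add: nth_append)
      ultimately show ?thesis by simp
    next
      case False
      then have x: "u_beta t q = length t - 1" using u_lt[of q] by simp
      have "phi t (u_beta t q) = [0]" using False by (simp add: phi_last)
      then have r0: "i = Sq q" using qr by simp
      have q1: "1 \<le> q" using i r0 Sq_0 by (cases q) auto
      have "u_beta t (i - 1) = last (phi t (u_beta t (q - 1)))" using prev_block[OF q1] r0 by simp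
      also have "u_beta t (q - 1) = c" using c x by simp
      finally show ?thesis .
    qed
  qed
  then show ?thesis by blast
qed

lemma notLS: "t ! 0 < k \<Longrightarrow> \<not> left_special (u_beta t) (replicate k 0)"
proof
  assume k: "t ! 0 < k" and ls: "left_special (u_beta t) (replicate k 0)"
  obtain c where c: "\<forall>i\<ge>1. (\<forall>s\<le>t ! 0. u_beta t (i + s) = 0) \<longrightarrow> u_beta t (i - 1) = c" using Bp by blast
  have key: "a = c" if f: "is_factor (u_beta t) (a # replicate k 0)" for a
  proof -
    obtain i where i: "\<forall>j<length (a # replicate k 0). u_beta t (i + j) = (a # replicate k 0) ! j"
      using f unfolding is_factor_def by blast
    have ua: "u_beta t i = a" using i[rule_format, of 0] by simp
    have "\<forall>s\<le>t ! 0. u_beta t (Suc i + s) = 0"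
    proof (intro allI impI)
      fix s assume "s \<le> t ! 0"
      then have "Suc s < length (a # replicate k 0)" using k by simp
      then show "u_beta t (Suc i + s) = 0" using i[rule_format, of "Suc s"] by simp
    qed
    then have "u_beta t (Suc i - 1) = c" using c[rule_format, of "Suc i"] by simp
    then show ?thesis using ua by simp
  qed
  from ls obtain a b where "a \<noteq> b" "is_factor (u_beta t) (a # replicate k 0)" "is_factor (u_beta t) (b # replicate k 0)"
    unfolding left_special_def by blast
  then show False using key by blast
qed

end

theorem lemma6:
  fixes t :: "nat list"
  assumes "simple_parry_digits t"
    and "t ! (length t - 1) = 1"
    and "maximal_left_special (u_beta t) w"
  shows "\<exists>j<length w. w ! j \<noteq> 0"
proof (rule ccontr)
  interpret pb t using assms(1,2) by unfold_locales
  assume "\<not> (\<exists>j<length w. w ! j \<noteq> 0)"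
  then have w: "w = replicate (length w) 0" by (simp add: list_eq_iff_nth_eq)
  have ls: "left_special (u_beta t) w" and nx: "\<nexists>a. left_special (u_beta t) (w @ [a])"
    using assms(3) unfolding maximal_left_special_def by auto
  show False
  proof (cases "length w \<le> t ! 0")
    case True
    then show False using small_ext[OF True] nx w by metis
  next
    case False
    then show False using notLS[of "length w"] ls w by simp
  qed
qed

end
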